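(* Let $N_{D\Lambda}$ be the smallest positive integer $N$ such that $N(x,x)\in2\mathbb Z$ for all $x\in\Lambda^\vee$, and $N'_{D\Lambda}$ the smallest positive integer $N$ with $Nx\in\Lambda$ for all $x\in\Lambda^\vee$ (the exponent of $G_\Lambda$). Then $N_{D\Lambda}=D_zf_\rho$, and $N'_{D\Lambda}=N_{D\Lambda}$ if $b_z$ is odd, while $N'_{D\Lambda}=N_{D\Lambda}/2$ if $b_z$ is even.
   Context: Let $z\in\mathcal H$ with $a_zz^2+b_zz+c_z=0$ for coprime integers $a_z>0,b_z,c_z$, $D_z=4a_zc_z-b_z^2>0$, and $f_\rho$ a positive integer. $\Lambda$ is the lattice with basis $e_2,e_1$ and Gram matrix $f_\rho\begin{pmatrix}2a_z&b_z\\ b_z&2c_z\end{pmatrix}$, with the bilinear form extended $\mathbb Q$-linearly; $\Lambda^\vee\subset\Lambda\otimes\mathbb Q$ is its dual lattice and $G_\Lambda=\Lambda^\vee/\Lambda$. *)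

theory Defs
  imports Complex_Main
begin

text \<open>Elements of \<Lambda> \<otimes> \<rat> are written as pairs (x1, x2) of rationals, meaning
  x1 e2 + x2 e1 in the basis e2, e1 of \<Lambda>.\<close>

definition bil :: "int \<Rightarrow> int \<Rightarrow> int \<Rightarrow> int \<Rightarrow> rat \<times> rat \<Rightarrow> rat \<times> rat \<Rightarrow> rat" where
  "bil a b c f x y = of_int f * (2 * of_int a * fst x * fst y
      + of_int b * (fst x * snd y + snd x * fst y) + 2 * of_int c * snd x * snd y)"

definition lattice :: "(rat \<times> rat) set" where
  "lattice = {x. fst x \<in> \<int> \<and> snd x \<in> \<int>}"

definition dual_lattice :: "int \<Rightarrow> int \<Rightarrow> int \<Rightarrow> int \<Rightarrow> (rat \<times> rat) set" where
  "dual_lattice a b c f = {x. \<forall>y\<in>lattice. bil a b c f x y \<in> \<int>}"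

definition scaleQ :: "rat \<Rightarrow> rat \<times> rat \<Rightarrow> rat \<times> rat" where
  "scaleQ t x = (t * fst x, t * snd x)"

definition level :: "int \<Rightarrow> int \<Rightarrow> int \<Rightarrow> int \<Rightarrow> nat" where
  "level a b c f = (LEAST N::nat. 0 < N \<and>
     (\<forall>x\<in>dual_lattice a b c f. \<exists>k::int. of_nat N * bil a b c f x x = 2 * of_int k))"

definition exponent_disc :: "int \<Rightarrow> int \<Rightarrow> int \<Rightarrow> int \<Rightarrow> nat" where
  "exponent_disc a b c f = (LEAST N::nat. 0 < N \<and>
     (\<forall>x\<in>dual_lattice a b c f. scaleQ (of_nat N) x \<in> lattice))"

end

theory Submission
  imports Defs
begin

abbreviation den :: "int \<Rightarrow> int \<Rightarrow> int \<Rightarrow> int \<Rightarrow> rat" where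
  "den a b c f \<equiv> of_int f * (4*of_int a*of_int c - (of_int b)^2)"

definition xv :: "int \<Rightarrow> int \<Rightarrow> int \<Rightarrow> int \<Rightarrow> int \<Rightarrow> int \<Rightarrow> rat \<times> rat" where
  "xv a b c f u v = ((2*of_int c*of_int u - of_int b*of_int v) / den a b c f,
                     (2*of_int a*of_int v - of_int b*of_int u) / den a b c f)"

lemma den_eq: "den a b c f = of_int (f*(4*a*c-b^2))" by simp

lemma g1: fixes A B C F U V :: rat assumes "F*(4*A*C-B^2) \<noteq> 0"
  shows "F * (2*A*((2*C*U - B*V)/(F*(4*A*C-B^2))) + B*((2*A*V - B*U)/(F*(4*A*C-B^2)))) = U"
proof -
  have "F * (2*A*((2*C*U - B*V)/(F*(4*A*C-B^2))) + B*((2*A*V - B*U)/(F*(4*A*C-B^2))))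
     = (F*(4*A*C-B^2)) * U / (F*(4*A*C-B^2))"
    by (simp add: add_divide_distrib[symmetric] diff_divide_distrib algebra_simps power2_eq_square)
  also have "\<dots> = U" using assms by simp
  finally show ?thesis .
qed

lemma g2: fixes A B C F U V :: rat assumes "F*(4*A*C-B^2) \<noteq> 0"
  shows "F * (B*((2*C*U - B*V)/(F*(4*A*C-B^2))) + 2*C*((2*A*V - B*U)/(F*(4*A*C-B^2)))) = V"
proof -
  have "F * (B*((2*C*U - B*V)/(F*(4*A*C-B^2))) + 2*C*((2*A*V - B*U)/(F*(4*A*C-B^2))))
     = (F*(4*A*C-B^2)) * V / (F*(4*A*C-B^2))"
    by (simp add: add_divide_distrib[symmetric] diff_divide_distrib algebra_simps power2_eq_square)
  also have "\<dots> = V" using assms by simp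
  finally show ?thesis .
qed

lemma g3: fixes A B C F U V x1 x2 :: rat assumes d: "F*(4*A*C-B^2) \<noteq> 0"
  and u: "F*(2*A*x1 + B*x2) = U" and v: "F*(B*x1 + 2*C*x2) = V"
  shows "x1 = (2*C*U - B*V)/(F*(4*A*C-B^2))" "x2 = (2*A*V - B*U)/(F*(4*A*C-B^2))"
proof -
  have "x1 * (F*(4*A*C-B^2)) = 2*C*U - B*V" unfolding u[symmetric] v[symmetric]
    by (simp add: algebra_simps power2_eq_square)
  then show "x1 = (2*C*U - B*V)/(F*(4*A*C-B^2))" using d by (simp add: eq_divide_eq)
  have "x2 * (F*(4*A*C-B^2)) = 2*A*V - B*U" unfolding u[symmetric] v[symmetric]
    by (simp add: algebra_simps power2_eq_square)
  then show "x2 = (2*A*V - B*U)/(F*(4*A*C-B^2))" using d by (simp add: eq_divide_eq)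
qed

lemma rat_div_Ints: "(M::int) \<noteq> 0 \<Longrightarrow> (of_int m / of_int M :: rat) \<in> \<int> \<longleftrightarrow> M dvd m"
proof
  assume M: "M \<noteq> 0" and "(of_int m / of_int M :: rat) \<in> \<int>"
  then obtain k where "(of_int m / of_int M :: rat) = of_int k" by (auto elim: Ints_cases)
  then have "(of_int m :: rat) = of_int (k*M)" using M by (simp add: field_simps)
  then have "m = k*M" by linarith
  then show "M dvd m" by simp
next
  assume M: "M \<noteq> 0" and "M dvd m"
  then obtain k where "m = M*k" by auto
  then have "(of_int m / of_int M :: rat) = of_int k" using M by simp
  then show "(of_int m / of_int M :: rat) \<in> \<int>" by simp
qed

lemma bil_lin: "bil a b c f x y = fst y * bil a b c f x (1,0) + snd y * bil a b c f x (0,1)"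
  unfolding bil_def by (simp add: algebra_simps)

lemma bil10: "bil a b c f x (1,0) = of_int f * (2*of_int a*fst x + of_int b*snd x)"
  unfolding bil_def by (simp add: algebra_simps)
lemma bil01: "bil a b c f x (0,1) = of_int f * (of_int b*fst x + 2*of_int c*snd x)"
  unfolding bil_def by (simp add: algebra_simps)

lemma dual_iff: "x \<in> dual_lattice a b c f \<longleftrightarrow> bil a b c f x (1,0) \<in> \<int> \<and> bil a b c f x (0,1) \<in> \<int>"
proof
  assume "x \<in> dual_lattice a b c f"
  then show "bil a b c f x (1,0) \<in> \<int> \<and> bil a b c f x (0,1) \<in> \<int>"
    unfolding dual_lattice_def lattice_def by auto
next
  assume h: "bil a b c f x (1,0) \<in> \<int> \<and> bil a b c f x (0,1) \<in> \<int>"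
  show "x \<in> dual_lattice a b c f"
    unfolding dual_lattice_def lattice_def
  proof (intro CollectI ballI)
    fix y :: "rat \<times> rat" assume "y \<in> {x. fst x \<in> \<int> \<and> snd x \<in> \<int>}"
    then show "bil a b c f x y \<in> \<int>" using h by (subst bil_lin) (auto intro: Ints_add Ints_mult)
  qed
qed

lemma bil_xv1: "den a b c f \<noteq> 0 \<Longrightarrow> bil a b c f (xv a b c f u v) (1,0) = of_int u"
  unfolding bil10 xv_def fst_conv snd_conv by (rule g1)

lemma bil_xv2: "den a b c f \<noteq> 0 \<Longrightarrow> bil a b c f (xv a b c f u v) (0,1) = of_int v"
  unfolding bil01 xv_def fst_conv snd_conv by (rule g2)

lemma xv_dual: "den a b c f \<noteq> 0 \<Longrightarrow> xv a b c f u v \<in> dual_lattice a b c f"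
  by (simp add: dual_iff bil_xv1 bil_xv2)

lemma dual_xv: assumes M: "den a b c f \<noteq> 0" and x: "x \<in> dual_lattice a b c f"
  shows "\<exists>u v. x = xv a b c f u v"
proof -
  from x obtain u v where u: "bil a b c f x (1,0) = of_int u" and v: "bil a b c f x (0,1) = of_int v"
    unfolding dual_iff by (auto elim!: Ints_cases)
  note uu = u[unfolded bil10] and vv = v[unfolded bil01]
  have "x = xv a b c f u v"
    using g3[OF M uu vv] unfolding xv_def by (cases x) simp
  then show ?thesis by blast
qed

lemma bil_xv: "den a b c f \<noteq> 0 \<Longrightarrow> bil a b c f (xv a b c f u v) (xv a b c f u v)
   = 2 * of_int (c*u^2 - b*u*v + a*v^2) / den a b c f"
  apply (subst bil_lin)
  apply (simp add: bil_xv1 bil_xv2)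
  unfolding xv_def by (simp add: add_divide_distrib[symmetric] diff_divide_distrib algebra_simps power2_eq_square)

lemma rdi: "den a b c f \<noteq> 0 \<Longrightarrow> (of_int m / den a b c f \<in> \<int>) = (f*(4*a*c-b^2) dvd m)"
  using rat_div_Ints[of "f*(4*a*c-b^2)" m] by (metis den_eq of_int_0)

lemma scale_xv: "den a b c f \<noteq> 0 \<Longrightarrow> scaleQ (of_nat N) (xv a b c f u v) \<in> lattice \<longleftrightarrow>
   (f*(4*a*c-b^2)) dvd (int N*(2*c*u - b*v)) \<and> (f*(4*a*c-b^2)) dvd (int N*(2*a*v - b*u))"
proof -
  assume d: "den a b c f \<noteq> 0"
  have e1: "of_nat N * ((2*of_int c*of_int u - of_int b*of_int v) / den a b c f)
     = (of_int (int N*(2*c*u - b*v)) / den a b c f :: rat)" by simp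
  have e2: "of_nat N * ((2*of_int a*of_int v - of_int b*of_int u) / den a b c f)
     = (of_int (int N*(2*a*v - b*u)) / den a b c f :: rat)" by simp
  show ?thesis unfolding scaleQ_def lattice_def xv_def fst_conv snd_conv mem_Collect_eq e1 e2 rdi[OF d] ..
qed


lemma lev_iff: assumes d: "den a b c f \<noteq> 0"
  shows "(\<forall>x\<in>dual_lattice a b c f. \<exists>k::int. of_nat N * bil a b c f x x = 2 * of_int k)
     \<longleftrightarrow> (\<forall>u v. f*(4*a*c-b^2) dvd int N*(c*u^2 - b*u*v + a*v^2))"
proof -
  have key: "(\<exists>k::int. of_nat N * bil a b c f (xv a b c f u v) (xv a b c f u v) = 2 * of_int k)
     \<longleftrightarrow> f*(4*a*c-b^2) dvd int N*(c*u^2 - b*u*v + a*v^2)" for u v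
  proof -
    have "of_nat N * bil a b c f (xv a b c f u v) (xv a b c f u v)
       = 2 * (of_int (int N*(c*u^2 - b*u*v + a*v^2)) / den a b c f)"
      using bil_xv[OF d, of u v] by simp
    moreover have "(\<exists>k::int. 2 * q = 2 * (of_int k::rat)) \<longleftrightarrow> q \<in> \<int>" for q
      by (auto elim!: Ints_cases)
    ultimately have "(\<exists>k::int. of_nat N * bil a b c f (xv a b c f u v) (xv a b c f u v) = 2 * of_int k)
       \<longleftrightarrow> (of_int (int N*(c*u^2 - b*u*v + a*v^2)) / den a b c f) \<in> \<int>"
      by presburger
    then show ?thesis using rdi[OF d, of "int N*(c*u^2 - b*u*v + a*v^2)"] by (rule trans)
  qed
  show ?thesis
  proof
    assume h: "\<forall>x\<in>dual_lattice a b c f. \<exists>k::int. of_nat N * bil a b c f x x = 2 * of_int k"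
    show "\<forall>u v. f*(4*a*c-b^2) dvd int N*(c*u^2 - b*u*v + a*v^2)"
      using h xv_dual[OF d] key by blast
  next
    assume h: "\<forall>u v. f*(4*a*c-b^2) dvd int N*(c*u^2 - b*u*v + a*v^2)"
    show "\<forall>x\<in>dual_lattice a b c f. \<exists>k::int. of_nat N * bil a b c f x x = 2 * of_int k"
      using h dual_xv[OF d] key by blast
  qed
qed

lemma exp_iff: assumes d: "den a b c f \<noteq> 0"
  shows "(\<forall>x\<in>dual_lattice a b c f. scaleQ (of_nat N) x \<in> lattice)
     \<longleftrightarrow> (\<forall>u v. (f*(4*a*c-b^2)) dvd (int N*(2*c*u - b*v)) \<and> (f*(4*a*c-b^2)) dvd (int N*(2*a*v - b*u)))"
  using xv_dual[OF d] dual_xv[OF d] scale_xv[OF d] by metis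

lemma gcd3: fixes M N a b c :: int assumes "gcd (gcd a b) c = 1"
  and "M dvd N*a" "M dvd N*b" "M dvd N*c" shows "M dvd N"
proof -
  have "M dvd gcd (N*a) (N*b)" using assms by simp
  then have "M dvd N * gcd a b" by (simp add: gcd_mult_left)
  then have "M dvd gcd (N * gcd a b) (N*c)" using assms by simp
  then show ?thesis using assms(1) by (simp add: gcd_mult_left)
qed

lemma main:
  fixes a b c f :: int
  assumes hcop: "gcd (gcd a b) c = 1"
    and hD: "4 * a * c - b^2 > 0"
    and hf: "f > 0"
  shows "int (level a b c f) = (4 * a * c - b^2) * f
    \<and> (odd b \<longrightarrow> exponent_disc a b c f = level a b c f)
    \<and> (even b \<longrightarrow> exponent_disc a b c f = level a b c f div 2)"
proof -
  define M where "M = f*(4*a*c-b^2)"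
  have Mpos: "M > 0" unfolding M_def using hD hf by simp
  have d: "den a b c f \<noteq> 0" using Mpos unfolding den_eq M_def[symmetric] by simp
  have lev: "level a b c f = nat M"
    unfolding level_def lev_iff[OF d] M_def[symmetric]
  proof (rule Least_equality)
    show "0 < nat M \<and> (\<forall>u v. M dvd int (nat M) * (c * u^2 - b * u * v + a * v^2))"
      using Mpos by simp
  next
    fix N assume h: "0 < N \<and> (\<forall>u v. M dvd int N * (c * u^2 - b * u * v + a * v^2))"
    have 1: "M dvd int N * c" using h[THEN conjunct2, rule_format, of 1 0] by simp
    have 2: "M dvd int N * a" using h[THEN conjunct2, rule_format, of 0 1] by simp
    have 3: "M dvd int N * (c - b + a)" using h[THEN conjunct2, rule_format, of 1 1] by simp
    have "int N * b = int N * c + int N * a - int N * (c - b + a)" by (simp add: algebra_simps)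
    then have 4: "M dvd int N * b" using 1 2 3 by (metis dvd_add dvd_diff)
    have "M dvd int N" using gcd3[OF hcop 2 4 1] .
    then show "nat M \<le> N" using h Mpos by (simp add: zdvd_imp_le nat_le_iff)
  qed
  have expmin: "M dvd 2 * int N \<and> M dvd int N * b"
    if h: "\<forall>u v. M dvd (int N*(2*c*u - b*v)) \<and> M dvd (int N*(2*a*v - b*u))" for N
  proof -
    have 1: "M dvd int N * (2*c)" and 4: "M dvd int N * b"
      using h[rule_format, of 1 0] by (simp_all add: algebra_simps)
    have 2: "M dvd int N * (2*a)" using h[rule_format, of 0 1] by (simp add: algebra_simps)
    have 5: "M dvd (2*int N) * b" using 4 by (metis dvd_mult mult.assoc mult.commute)
    have "M dvd 2 * int N" using gcd3[OF hcop, of M "2*int N"] 1 2 5 by (simp add: algebra_simps)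
    then show ?thesis using 4 by simp
  qed
  have odd_case: "exponent_disc a b c f = nat M" if ob: "odd b"
    unfolding exponent_disc_def exp_iff[OF d] M_def[symmetric]
  proof (rule Least_equality)
    show "0 < nat M \<and> (\<forall>u v. M dvd int (nat M) * (2 * c * u - b * v) \<and> M dvd int (nat M) * (2 * a * v - b * u))"
      using Mpos by simp
  next
    fix N assume h: "0 < N \<and> (\<forall>u v. M dvd int N * (2 * c * u - b * v) \<and> M dvd int N * (2 * a * v - b * u))"
    then have e: "M dvd 2 * int N" "M dvd int N * b" using expmin by blast+
    have "M dvd gcd (int N * 2) (int N * b)" using e by (simp add: mult.commute)
    also have "gcd (int N * 2) (int N * b) = int N * gcd 2 b" by (simp add: gcd_mult_left)
    also have "gcd 2 b = 1" using ob by simp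
    finally have "M dvd int N" by simp
    then show "nat M \<le> N" using h Mpos by (simp add: zdvd_imp_le nat_le_iff)
  qed
  have even_case: "exponent_disc a b c f = nat M div 2" if eb: "even b"
  proof -
    obtain b' where b': "b = 2*b'" using eb by blast
    define E where "E = f*(2*a*c - 2*b'^2)"
    have ME: "M = 2*E" unfolding M_def E_def b' by (simp add: algebra_simps power2_eq_square)
    have "exponent_disc a b c f = nat E"
      unfolding exponent_disc_def exp_iff[OF d] M_def[symmetric]
    proof (rule Least_equality)
      show "0 < nat E \<and> (\<forall>u v. M dvd int (nat E) * (2 * c * u - b * v) \<and> M dvd int (nat E) * (2 * a * v - b * u))"
        using Mpos unfolding ME b' by (simp add: algebra_simps)
    next
      fix N assume h: "0 < N \<and> (\<forall>u v. M dvd int N * (2 * c * u - b * v) \<and> M dvd int N * (2 * a * v - b * u))"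
      then have e: "M dvd 2 * int N" using expmin by blast
      then have "E dvd int N" unfolding ME by simp
      then show "nat E \<le> N" using h Mpos ME by (simp add: zdvd_imp_le nat_le_iff)
    qed
    then show ?thesis using ME Mpos by simp
  qed
  have "int (nat M) = (4 * a * c - b^2) * f" using Mpos unfolding M_def by (simp add: mult.commute)
  then show ?thesis using lev odd_case even_case by simp
qed

theorem lemma2p4p3:
  fixes z :: complex and a b c f :: int
  assumes hz: "Im z > 0"
    and hroot: "of_int a * z^2 + of_int b * z + of_int c = 0"
    and ha: "a > 0"
    and hcop: "gcd (gcd a b) c = 1"
    and hD: "4 * a * c - b^2 > 0"
    and hf: "f > 0"
  shows "int (level a b c f) = (4 * a * c - b^2) * f
    \<and> (odd b \<longrightarrow> exponent_disc a b c f = level a b c f)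
    \<and> (even b \<longrightarrow> exponent_disc a b c f = level a b c f div 2)"
  using main[OF hcop hD hf] .

end
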